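(* With $G$, $d$, $G_0$, $X$ and the topology $\tau$ as in the context, let $Y$ be any Polish space with a continuous action of $G$. Then there is a map $\pi:Y\to X$ that is continuous, one-to-one, satisfies $\pi(g\cdot y)=g\cdot\pi(y)$ for all $g\in G$, $y\in Y$, and is open onto its image: for every open $U\subseteq Y$ there is a $\tau$-open $O\subseteq X$ with $U=\{y\in Y:\pi(y)\in O\}$.
   Context: Let $G$ be a Polish group, $d$ a compatible right-invariant metric on $G$ (i.e. $d(g_0h,g_1h)=d(g_0,g_1)$) bounded by $1$, and $G_0$ a countable dense subgroup of $G$. Let $\mathcal L(G,d)$ be the set of functions $f:G\to[0,1]$ with $|f(g_1)-f(g_2)|\le d(g_1,g_2)$ for all $g_1,g_2$. Let $\mathbb Q^{<\mathbb N}$ be the set of finite sequences of rationals; for $s\in\mathbb Q^{<\mathbb N}$ and rationals $a_1,\dots,a_k$, $sa_1\dots a_k$ denotes the sequence $s$ followed by $a_1,\dots,a_k$ (natural numbers are regarded as rationals). Elements of $\mathcal L(G,d)^{\mathbb Q^{<\mathbb N}}$ are families $\vec f=(f_s)_{s\in\mathbb Q^{<\mathbb N}}$, and $G$ acts by $(g\cdot\vec f)_s(g_0)=f_s(g_0g)$. Let $X$ be the set of $\vec f\in\mathcal L(G,d)^{\mathbb Q^{<\mathbb N}}$ such that, writing $t=sq_0q_1q_2\,0\,m\,n$ and $u=sq_0q_1q_2\,1\,m\,n$: (1) for all $s\in\mathbb Q^{<\mathbb N}$, $g_0\in G_0$, $m,n\in\mathbb N$, $q_0,q_1,q_2,\epsilon\in\mathbb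 Q\cap(0,1)$ with $0<q_i\pm\epsilon<1$ ($i=0,1,2$): $f_t(g_0)<q_1-\epsilon$ or $f_s(g_0)\le q_0+\epsilon$; (2) for the same range of parameters: $f_u(g_0)\ge q_2+\epsilon$ or $f_t(g_0)\ge q_1-\epsilon$; (3) for all $s\in\mathbb Q^{<\mathbb N}$, $g_0\in G_0$, $q_0,\epsilon\in\mathbb Q\cap(0,1)$: if $f_s(g_0)<q_0$ then there are $q_1,q_2\in\mathbb Q$, $g_1\in G_0$, $m,n\in\mathbb N$ with $0<q_2<q_1<q_0<1$, $d(g_0,g_1)<\epsilon$, and $f_u(g_1)<q_2$ where $u=sq_0q_1q_2\,1\,m\,n$. The topology $\tau$ on $X$ is the one generated by the subbasis of all sets $\{\vec f\in X: f_s(g_0)<q_0\}$ for $s\in\mathbb Q^{<\mathbb N}$, $g_0\in G_0$, $q_0\in\mathbb Q$. A Polish space is a separable completely metrizable space; a continuous action means the action map $G\times Y\to Y$ is jointly continuous. *)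

theory Defs
  imports "HOL-Analysis.Analysis" "HOL-Algebra.Group_Action"
begin

definition Polish_space :: "'a topology \<Rightarrow> bool" where
  "Polish_space X \<longleftrightarrow> completely_metrizable_space X \<and> separable_space X"

definition Lip_fun :: "('g, 'b) monoid_scheme \<Rightarrow> ('g \<Rightarrow> 'g \<Rightarrow> real) \<Rightarrow> ('g \<Rightarrow> real) set" where
  "Lip_fun G d = {f. f \<in> extensional (carrier G)
      \<and> (\<forall>x\<in>carrier G. 0 \<le> f x \<and> f x \<le> 1)
      \<and> (\<forall>x\<in>carrier G. \<forall>y\<in>carrier G. \<bar>f x - f y\<bar> \<le> d x y)}"

definition in01 :: "rat \<Rightarrow> bool" where
  "in01 q \<longleftrightarrow> 0 < q \<and> q < 1"

text \<open>The space X: families indexed by finite sequences of rationals satisfying (1)-(3).\<close>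
definition Xset :: "('g, 'b) monoid_scheme \<Rightarrow> ('g \<Rightarrow> 'g \<Rightarrow> real) \<Rightarrow> 'g set
                     \<Rightarrow> (rat list \<Rightarrow> 'g \<Rightarrow> real) set" where
  "Xset G d G0 = {F. (\<forall>s. F s \<in> Lip_fun G d)
     \<and> (\<forall>s. \<forall>g0\<in>G0. \<forall>m n :: nat. \<forall>q0 q1 q2 \<epsilon> :: rat.
          in01 q0 \<and> in01 q1 \<and> in01 q2 \<and> in01 \<epsilon>
          \<and> in01 (q0 - \<epsilon>) \<and> in01 (q0 + \<epsilon>) \<and> in01 (q1 - \<epsilon>) \<and> in01 (q1 + \<epsilon>)
          \<and> in01 (q2 - \<epsilon>) \<and> in01 (q2 + \<epsilon>) \<longrightarrow>
          F (s @ [q0, q1, q2, 0, of_nat m, of_nat n]) g0 < of_rat (q1 - \<epsilon>)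
          \<or> F s g0 \<le> of_rat (q0 + \<epsilon>))
     \<and> (\<forall>s. \<forall>g0\<in>G0. \<forall>m n :: nat. \<forall>q0 q1 q2 \<epsilon> :: rat.
          in01 q0 \<and> in01 q1 \<and> in01 q2 \<and> in01 \<epsilon>
          \<and> in01 (q0 - \<epsilon>) \<and> in01 (q0 + \<epsilon>) \<and> in01 (q1 - \<epsilon>) \<and> in01 (q1 + \<epsilon>)
          \<and> in01 (q2 - \<epsilon>) \<and> in01 (q2 + \<epsilon>) \<longrightarrow>
          F (s @ [q0, q1, q2, 1, of_nat m, of_nat n]) g0 \<ge> of_rat (q2 + \<epsilon>)
          \<or> F (s @ [q0, q1, q2, 0, of_nat m, of_nat n]) g0 \<ge> of_rat (q1 - \<epsilon>))
     \<and> (\<forall>s. \<forall>g0\<in>G0. \<forall>q0 \<epsilon> :: rat. in01 q0 \<and> in01 \<epsilon> \<longrightarrow>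
          F s g0 < of_rat q0 \<longrightarrow>
          (\<exists>q1 q2 :: rat. \<exists>g1\<in>G0. \<exists>m n :: nat.
              0 < q2 \<and> q2 < q1 \<and> q1 < q0 \<and> q0 < 1 \<and> d g0 g1 < of_rat \<epsilon>
              \<and> F (s @ [q0, q1, q2, 1, of_nat m, of_nat n]) g1 < of_rat q2))}"

definition Xtop :: "('g, 'b) monoid_scheme \<Rightarrow> ('g \<Rightarrow> 'g \<Rightarrow> real) \<Rightarrow> 'g set
                     \<Rightarrow> (rat list \<Rightarrow> 'g \<Rightarrow> real) topology" where
  "Xtop G d G0 = topology_generated_by
     {{F \<in> Xset G d G0. F s g0 < of_rat q0} | s g0 q0. g0 \<in> G0}"

definition actX :: "('g, 'b) monoid_scheme \<Rightarrow> 'g \<Rightarrow> (rat list \<Rightarrow> 'g \<Rightarrow> real)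
                     \<Rightarrow> (rat list \<Rightarrow> 'g \<Rightarrow> real)" where
  "actX G g F = (\<lambda>s. \<lambda>g0\<in>carrier G. F s (g0 \<otimes>\<^bsub>G\<^esub> g))"

end

theory Submission
  imports Defs
begin

definition clamp :: "real \<Rightarrow> real" where "clamp x = max 0 (min 1 x)"

lemma clamp_range: "0 \<le> clamp x" "clamp x \<le> 1" by (auto simp: clamp_def)
lemma clamp_lip: "\<bar>clamp x - clamp y\<bar> \<le> \<bar>x - y\<bar>" by (auto simp: clamp_def)
lemma clamp_less: "clamp x < c \<longleftrightarrow> 0 < c \<and> (1 < c \<or> x < c)" by (auto simp: clamp_def)
lemma clamp_ge: "c \<le> 1 \<Longrightarrow> c \<le> x \<Longrightarrow> c \<le> clamp x" by (auto simp: clamp_def)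

locale emb = group G for G :: "('g, 'b) monoid_scheme" (structure) +
  fixes d :: "'g \<Rightarrow> 'g \<Rightarrow> real"
    and TY :: "'y topology"
    and a :: "'g \<Rightarrow> 'y \<Rightarrow> 'y"
    and M :: "'y set"
    and \<rho> :: "'y \<Rightarrow> 'y \<Rightarrow> real"
    and cen :: "nat \<Rightarrow> 'y"
  assumes dm: "Metric_space (carrier G) d"
    and rinv: "\<forall>x\<in>carrier G. \<forall>y\<in>carrier G. \<forall>h\<in>carrier G. d (x \<otimes> h) (y \<otimes> h) = d x y"
    and act: "group_action G M a"
    and cont: "continuous_map (prod_topology (Metric_space.mtopology (carrier G) d) TY) TY
                        (\<lambda>(g, y). a g y)"
    and ym: "Metric_space M \<rho>"
    and TYeq: "TY = Metric_space.mtopology M \<rho>"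
    and cenM: "\<And>i. cen i \<in> M"
    and dense: "\<And>z e. z \<in> M \<Longrightarrow> e > 0 \<Longrightarrow> \<exists>i. \<rho> (cen i) z < e"
begin

lemma topY: "topspace TY = M"
  using TYeq Metric_space.topspace_mtopology[OF ym] by simp

lemma grp: "group G" by (rule group_axioms)
lemma one_c: "\<one> \<in> carrier G" by simp

lemma d_nonneg: "0 \<le> d x y" using Metric_space.nonneg[OF dm] .
lemma d_comm: "d x y = d y x" using Metric_space.commute[OF dm] .
lemma d_self: "x \<in> carrier G \<Longrightarrow> d x x = 0" using Metric_space.mdist_zero[OF dm] .
lemma d_tri: "x \<in> carrier G \<Longrightarrow> y \<in> carrier G \<Longrightarrow> z \<in> carrier G \<Longrightarrow> d x z \<le> d x y + d y z"
  using Metric_space.triangle[OF dm] .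

lemma rho_nonneg: "0 \<le> \<rho> x y" using Metric_space.nonneg[OF ym] .
lemma rho_comm: "\<rho> x y = \<rho> y x" using Metric_space.commute[OF ym] .
lemma rho_tri: "x \<in> M \<Longrightarrow> y \<in> M \<Longrightarrow> z \<in> M \<Longrightarrow> \<rho> x z \<le> \<rho> x y + \<rho> y z"
  using Metric_space.triangle[OF ym] .

lemma inv_c: "g \<in> carrier G \<Longrightarrow> inv g \<in> carrier G" by simp
lemma mult_c: "g \<in> carrier G \<Longrightarrow> h \<in> carrier G \<Longrightarrow> g \<otimes> h \<in> carrier G" by simp

lemma d_inv: "g \<in> carrier G \<Longrightarrow> h \<in> carrier G \<Longrightarrow> d (g \<otimes> inv h) \<one> = d g h"
proof -
  assume g: "g \<in> carrier G" and h: "h \<in> carrier G"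
  have "d (g \<otimes> inv h \<otimes> h) (\<one> \<otimes> h) = d (g \<otimes> inv h) \<one>"
    by (rule rinv[rule_format]) (use g h in auto)
  then have "d (g \<otimes> inv h) \<one> = d (g \<otimes> inv h \<otimes> h) (\<one> \<otimes> h)" by simp
  also have "g \<otimes> inv h \<otimes> h = g" using g h by (simp add: m_assoc)
  also have "\<one> \<otimes> h = h" using h by simp
  finally show ?thesis .
qed

lemma d_inv1: "h \<in> carrier G \<Longrightarrow> d (inv h) \<one> = d h \<one>"
  using d_inv[of \<one> h] d_comm by simp

lemma a_M: "g \<in> carrier G \<Longrightarrow> x \<in> M \<Longrightarrow> a g x \<in> M"
  using group_action.element_image[OF act _ _ refl] by blast
lemma a_comp: "x \<in> M \<Longrightarrow> g \<in> carrier G \<Longrightarrow> h \<in> carrier G \<Longrightarrow> a (g \<otimes> h) x = a g (a h x)"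
  by (rule group_action.composition_rule[OF act])
lemma a_one: "x \<in> M \<Longrightarrow> a \<one> x = x"
proof -
  assume x: "x \<in> M"
  have "a \<one> x = (\<lambda>x\<in>M. x) x" using group_action.id_eq_one[OF act] by simp
  also have "\<dots> = x" using x by simp
  finally show ?thesis .
qed

lemma cont_a: "g \<in> carrier G \<Longrightarrow> continuous_map TY TY (a g)"
proof -
  assume g: "g \<in> carrier G"
  have c1: "continuous_map TY (Metric_space.mtopology (carrier G) d) (\<lambda>y. g)"
    using g Metric_space.topspace_mtopology[OF dm] continuous_map_const by metis
  have "continuous_map TY (prod_topology (Metric_space.mtopology (carrier G) d) TY) (\<lambda>y. (g, y))"
    using c1 continuous_map_pairedI[OF c1, of TY "\<lambda>y. y"] continuous_map_id by (simp add: id_def)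
  from continuous_map_compose[OF this cont] 
  have "continuous_map TY TY ((\<lambda>(g, y). a g y) \<circ> (\<lambda>y. (g, y)))" .
  moreover have "((\<lambda>(g, y). a g y) \<circ> (\<lambda>y. (g, y))) = a g" by (rule ext) simp
  ultimately show ?thesis by simp
qed


lemma carrier_ne: "carrier G \<noteq> {}" using one_c by blast

lemma a_inv_cancel: "w \<in> M \<Longrightarrow> k \<in> carrier G \<Longrightarrow> a (inv k) (a k w) = w"
proof -
  assume w: "w \<in> M" and k: "k \<in> carrier G"
  have "a (inv k) (a k w) = a (inv k \<otimes> k) w" using a_comp[OF w inv_c[OF k] k] by simp
  also have "inv k \<otimes> k = \<one>" using k by simp
  finally show ?thesis using a_one[OF w] by simp
qed

lemma cont_rho: "c \<in> M \<Longrightarrow> continuous_map TY euclideanreal (\<lambda>w. \<rho> w c)"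
proof -
  assume c: "c \<in> M"
  have "continuous_map (mtopology_of (metric (M,\<rho>))) euclidean (mdist (metric (M,\<rho>)) c)"
    using continuous_on_mdist[of c "metric (M,\<rho>)"] c by (simp add: Metric_space.mspace_metric[OF ym])
  hence "continuous_map TY euclideanreal (\<rho> c)"
    by (simp add: Metric_space.mtopology_of[OF ym] Metric_space.mdist_metric[OF ym] TYeq)
  moreover have "\<rho> c = (\<lambda>w. \<rho> w c)" using rho_comm by auto
  ultimately show ?thesis by simp
qed

definition bump :: "'y \<Rightarrow> real \<Rightarrow> 'y \<Rightarrow> real" where
  "bump c r w = min 1 (max 0 (\<rho> w c / r - 1))"
definition chi :: "real \<Rightarrow> 'y \<Rightarrow> real \<Rightarrow> 'y \<Rightarrow> real" where
  "chi q c r w = q * (2 * bump c r w - 1)"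

lemma cont_bump: "c \<in> M \<Longrightarrow> continuous_map TY euclideanreal (bump c r)"
  unfolding bump_def divide_inverse
  by (intro continuous_intros continuous_map_real_mult_right cont_rho)

lemma cont_chi: "c \<in> M \<Longrightarrow> continuous_map TY euclideanreal (chi q c r)"
  unfolding chi_def
  by (intro continuous_intros continuous_map_real_mult_left cont_bump)

lemma bump_range: "0 \<le> bump c r w" "bump c r w \<le> 1" by (auto simp: bump_def)
lemma bump_zero: "r > 0 \<Longrightarrow> \<rho> w c \<le> r \<Longrightarrow> bump c r w = 0"
  by (auto simp: bump_def field_simps)
lemma bump_one: "r > 0 \<Longrightarrow> \<rho> w c \<ge> 2 * r \<Longrightarrow> bump c r w = 1"
  by (auto simp: bump_def field_simps)
lemma bump_lt1: "r > 0 \<Longrightarrow> bump c r w < 1 \<Longrightarrow> \<rho> w c < 2 * r"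
  by (rule ccontr) (use bump_one[of r w c] in simp)

lemma chi_range: "q \<ge> 0 \<Longrightarrow> -q \<le> chi q c r w \<and> chi q c r w \<le> q"
proof -
  assume q: "q \<ge> 0"
  have "-1 \<le> 2 * bump c r w - 1" "2 * bump c r w - 1 \<le> 1" using bump_range[of c r w] by auto
  then show ?thesis unfolding chi_def using q
    by (metis mult.right_neutral mult_left_mono mult_minus_right)
qed

lemma cont_act: "continuous_map TY euclideanreal f \<Longrightarrow> g \<in> carrier G
   \<Longrightarrow> continuous_map TY euclideanreal (\<lambda>z. f (a g z))"
  using continuous_map_compose[OF cont_a] by (simp add: o_def)

definition supc :: "('y \<Rightarrow> real) \<Rightarrow> 'y \<Rightarrow> real" where
  "supc f z = (SUP g\<in>carrier G. f (a g z) - d g \<one>)"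
definition infc :: "('y \<Rightarrow> real) \<Rightarrow> 'y \<Rightarrow> real" where
  "infc f z = (INF g\<in>carrier G. f (a g z) + d g \<one>)"

definition usc :: "('y \<Rightarrow> real) \<Rightarrow> bool" where
  "usc P \<longleftrightarrow> (\<forall>c. openin TY {z \<in> M. P z < c})"
definition lsc :: "('y \<Rightarrow> real) \<Rightarrow> bool" where
  "lsc P \<longleftrightarrow> (\<forall>c. openin TY {z \<in> M. c < P z})"
definition olip :: "('y \<Rightarrow> real) \<Rightarrow> bool" where
  "olip P \<longleftrightarrow> (\<forall>w\<in>M. \<forall>k\<in>carrier G. \<bar>P (a k w) - P w\<bar> \<le> d k \<one>)"

lemma olip_intro:
  assumes "\<And>w k. w \<in> M \<Longrightarrow> k \<in> carrier G \<Longrightarrow> P w \<le> P (a k w) + d k \<one>"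
  shows "olip P"
  unfolding olip_def
proof (intro ballI)
  fix w k assume w: "w \<in> M" and k: "k \<in> carrier G"
  have 1: "P w \<le> P (a k w) + d k \<one>" using assms w k by blast
  have "P (a k w) \<le> P (a (inv k) (a k w)) + d (inv k) \<one>"
    using assms[OF a_M[OF k w] inv_c[OF k]] .
  then have 2: "P (a k w) \<le> P w + d k \<one>" using a_inv_cancel[OF w k] d_inv1[OF k] by simp
  show "\<bar>P (a k w) - P w\<bar> \<le> d k \<one>" using 1 2 by linarith
qed

lemma olipD: "olip P \<Longrightarrow> w \<in> M \<Longrightarrow> k \<in> carrier G \<Longrightarrow> P w \<le> P (a k w) + d k \<one>"
  unfolding olip_def by fastforce

lemma olip_const: "olip (\<lambda>z. c)" unfolding olip_def using d_nonneg by simp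

lemma olip_clamp: assumes P: "olip P" and that: "\<bar>s\<bar> = 1" shows "olip (\<lambda>z. clamp (b + s * P z))"
  unfolding olip_def
proof (intro ballI)
  fix w k assume w: "w \<in> M" and k: "k \<in> carrier G"
  have "\<bar>clamp (b + s * P (a k w)) - clamp (b + s * P w)\<bar> \<le> \<bar>(b + s * P (a k w)) - (b + s * P w)\<bar>"
    by (rule clamp_lip)
  also have "\<dots> = \<bar>s\<bar> * \<bar>P (a k w) - P w\<bar>" by (simp add: abs_mult[symmetric] algebra_simps)
  also have "\<dots> \<le> d k \<one>" using P w k that unfolding olip_def by simp
  finally show "\<bar>clamp (b + s * P (a k w)) - clamp (b + s * P w)\<bar> \<le> d k \<one>" .
qed

lemma usc_const: "usc (\<lambda>z. c)"
  unfolding usc_def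
proof
  fix x
  show "openin TY {z \<in> M. c < x}"
    by (cases "c < x") (simp_all add: topY[symmetric])
qed

lemma usc_clamp_plus: "usc P \<Longrightarrow> usc (\<lambda>z. clamp (b + P z))"
  unfolding usc_def
proof
  fix x assume P: "\<forall>c. openin TY {z \<in> M. P z < c}"
  have "{z \<in> M. clamp (b + P z) < x} = (if 0 < x then (if 1 < x then M else {z \<in> M. P z < x - b}) else {})"
    by (auto simp: clamp_less)
  then show "openin TY {z \<in> M. clamp (b + P z) < x}"
    using P by (simp add: topY[symmetric])
qed

lemma usc_clamp_minus: "lsc P \<Longrightarrow> usc (\<lambda>z. clamp (b - P z))"
  unfolding usc_def
proof
  fix x assume P: "lsc P"
  have "{z \<in> M. clamp (b - P z) < x} = (if 0 < x then (if 1 < x then M else {z \<in> M. b - x < P z}) else {})"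
    by (auto simp: clamp_less)
  then show "openin TY {z \<in> M. clamp (b - P z) < x}"
    using P unfolding lsc_def by (simp add: topY[symmetric])
qed

context
  fixes f :: "'y \<Rightarrow> real" and lo hi :: real
  assumes fb: "\<And>w. w \<in> M \<Longrightarrow> lo \<le> f w \<and> f w \<le> hi"
begin

lemma supc_bdd: "z \<in> M \<Longrightarrow> bdd_above ((\<lambda>g. f (a g z) - d g \<one>) ` carrier G)"
  unfolding bdd_above_def using fb a_M d_nonneg
  by (smt (verit, best) image_iff)

lemma infc_bdd: "z \<in> M \<Longrightarrow> bdd_below ((\<lambda>g. f (a g z) + d g \<one>) ` carrier G)"
  unfolding bdd_below_def using fb a_M d_nonneg
  by (smt (verit, best) image_iff)

lemma supc_ge: "z \<in> M \<Longrightarrow> g \<in> carrier G \<Longrightarrow> f (a g z) - d g \<one> \<le> supc f z"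
  unfolding supc_def by (rule cSUP_upper) (auto intro: supc_bdd)

lemma supc_le: "(\<And>g. g \<in> carrier G \<Longrightarrow> f (a g z) - d g \<one> \<le> c) \<Longrightarrow> supc f z \<le> c"
  unfolding supc_def by (rule cSUP_least) (auto simp: carrier_ne)

lemma infc_le: "z \<in> M \<Longrightarrow> g \<in> carrier G \<Longrightarrow> infc f z \<le> f (a g z) + d g \<one>"
  unfolding infc_def by (rule cINF_lower) (auto intro: infc_bdd)

lemma infc_ge: "(\<And>g. g \<in> carrier G \<Longrightarrow> c \<le> f (a g z) + d g \<one>) \<Longrightarrow> c \<le> infc f z"
  unfolding infc_def by (rule cINF_greatest) (auto simp: carrier_ne)

lemma supc_self: "z \<in> M \<Longrightarrow> f z \<le> supc f z"
  using supc_ge[of z \<one>] a_one d_self by simp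

lemma infc_self: "z \<in> M \<Longrightarrow> infc f z \<le> f z"
  using infc_le[of z \<one>] a_one d_self by simp

lemma supc_upper: "supc f z \<le> hi" if "z \<in> M"
proof (rule supc_le)
  fix g assume g: "g \<in> carrier G"
  have "a g z \<in> M" using a_M[OF g that] .
  then show "f (a g z) - d g \<one> \<le> hi" using fb[of "a g z"] d_nonneg[of g \<one>] by linarith
qed

lemma infc_lower: "lo \<le> infc f z" if "z \<in> M"
proof (rule infc_ge)
  fix g assume g: "g \<in> carrier G"
  have "a g z \<in> M" using a_M[OF g that] .
  then show "lo \<le> f (a g z) + d g \<one>" using fb[of "a g z"] d_nonneg[of g \<one>] by linarith
qed

lemma supc_olip: "olip (supc f)"
proof (rule olip_intro)
  fix w k assume w: "w \<in> M" and k: "k \<in> carrier G"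
  show "supc f w \<le> supc f (a k w) + d k \<one>"
  proof (rule supc_le)
    fix g assume g: "g \<in> carrier G"
    have gk: "g \<otimes> inv k \<in> carrier G" using g k by simp
    have "a (g \<otimes> inv k) (a k w) = a (g \<otimes> inv k \<otimes> k) w" using a_comp[OF w gk k] by simp
    also have "g \<otimes> inv k \<otimes> k = g" using g k by (simp add: m_assoc)
    finally have e: "a (g \<otimes> inv k) (a k w) = a g w" .
    have "f (a (g \<otimes> inv k) (a k w)) - d (g \<otimes> inv k) \<one> \<le> supc f (a k w)"
      by (rule supc_ge) (use a_M[OF k w] gk in auto)
    then have "f (a g w) - d (g \<otimes> inv k) \<one> \<le> supc f (a k w)" unfolding e .
    moreover have "d (g \<otimes> inv k) \<one> = d g k" using d_inv[OF g k] .
    moreover have "d g k \<le> d g \<one> + d \<one> k" using d_tri[OF g one_c k] .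
    moreover have "d \<one> k = d k \<one>" using d_comm .
    ultimately show "f (a g w) - d g \<one> \<le> supc f (a k w) + d k \<one>" by linarith
  qed
qed

lemma infc_olip: "olip (infc f)"
proof (rule olip_intro)
  fix w k assume w: "w \<in> M" and k: "k \<in> carrier G"
  have "infc f w - d k \<one> \<le> infc f (a k w)"
  proof (rule infc_ge)
    fix h assume h: "h \<in> carrier G"
    have hk: "h \<otimes> k \<in> carrier G" using h k by simp
    have e: "a (h \<otimes> k) w = a h (a k w)" using a_comp[OF w h k] .
    have "infc f w \<le> f (a (h \<otimes> k) w) + d (h \<otimes> k) \<one>"
      by (rule infc_le) (use w hk in auto)
    moreover have "d (h \<otimes> k) \<one> \<le> d (h \<otimes> k) k + d k \<one>" using d_tri[OF hk k one_c] .
    moreover have "d (h \<otimes> k) (\<one> \<otimes> k) = d h \<one>" by (rule rinv[rule_format]) (use h k in auto)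
    ultimately show "infc f w - d k \<one> \<le> f (a h (a k w)) + d h \<one>" using e k by simp
  qed
  then show "infc f w \<le> infc f (a k w) + d k \<one>" by simp
qed

lemma supc_lsc: "continuous_map TY euclideanreal f \<Longrightarrow> lsc (supc f)"
  unfolding lsc_def
proof
  fix c assume f: "continuous_map TY euclideanreal f"
  have eq: "{z \<in> M. c < supc f z} = (\<Union>g\<in>carrier G. {z \<in> topspace TY. f (a g z) - d g \<one> \<in> {c<..}})"
  proof -
    have "\<And>z. z \<in> M \<Longrightarrow> c < supc f z \<longleftrightarrow> (\<exists>g\<in>carrier G. c < f (a g z) - d g \<one>)"
      unfolding supc_def by (rule less_cSUP_iff) (auto simp: carrier_ne intro: supc_bdd)
    then show ?thesis by (auto simp: topY)
  qed
  have "\<And>g. g \<in> carrier G \<Longrightarrow> openin TY {z \<in> topspace TY. f (a g z) - d g \<one> \<in> {c<..}}"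
    by (rule openin_continuous_map_preimage) (auto intro!: continuous_intros cont_act f)
  then show "openin TY {z \<in> M. c < supc f z}" unfolding eq by blast
qed

lemma infc_usc: "continuous_map TY euclideanreal f \<Longrightarrow> usc (infc f)"
  unfolding usc_def
proof
  fix c assume f: "continuous_map TY euclideanreal f"
  have eq: "{z \<in> M. infc f z < c} = (\<Union>g\<in>carrier G. {z \<in> topspace TY. f (a g z) + d g \<one> \<in> {..<c}})"
  proof -
    have "\<And>z. z \<in> M \<Longrightarrow> infc f z < c \<longleftrightarrow> (\<exists>g\<in>carrier G. f (a g z) + d g \<one> < c)"
      unfolding infc_def by (rule cINF_less_iff) (auto simp: carrier_ne intro: infc_bdd)
    then show ?thesis by (auto simp: topY)
  qed
  have "\<And>g. g \<in> carrier G \<Longrightarrow> openin TY {z \<in> topspace TY. f (a g z) + d g \<one> \<in> {..<c}}"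
    by (rule openin_continuous_map_preimage) (auto intro!: continuous_intros cont_act f)
  then show "openin TY {z \<in> M. infc f z < c}" unfolding eq by blast
qed

end


lemma infc_less: assumes fb: "\<And>w. w \<in> M \<Longrightarrow> lo \<le> f w" and z: "z \<in> M" and lt: "infc f z < c"
  shows "\<exists>g\<in>carrier G. f (a g z) + d g \<one> < c"
proof -
  have bdd: "bdd_below ((\<lambda>g. f (a g z) + d g \<one>) ` carrier G)"
    unfolding bdd_below_def using fb a_M[OF _ z] d_nonneg
    by (smt (verit, best) image_iff)
  show ?thesis using lt unfolding infc_def using cINF_less_iff[OF carrier_ne bdd] by blast
qed

definition ctr :: "nat \<Rightarrow> 'y" where "ctr m = cen (fst (prod_decode m))"
definition rad :: "nat \<Rightarrow> real" where "rad m = 1 / (real (snd (prod_decode m)) + 1)"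

lemma rad_pos: "rad m > 0" unfolding rad_def by simp
lemma ctr_M: "ctr m \<in> M" unfolding ctr_def using cenM by simp

definition nontriv :: "('y \<Rightarrow> real) \<Rightarrow> real \<Rightarrow> real \<Rightarrow> nat \<Rightarrow> nat \<Rightarrow> bool" where
  "nontriv P q0 q2 m n \<longleftrightarrow> (\<forall>w\<in>M. \<rho> w (ctr m) < 2 * rad m \<longrightarrow> P w < q0)
     \<and> (\<forall>w\<in>M. \<rho> w (ctr n) < 2 * rad n \<longrightarrow>
           (\<forall>g\<in>carrier G. d g \<one> < 2 * q2 \<longrightarrow> \<rho> (a g w) (ctr m) \<le> rad m))"

definition Dfun :: "real \<Rightarrow> nat \<Rightarrow> 'y \<Rightarrow> real" where
  "Dfun q2 m = supc (chi q2 (ctr m) (rad m))"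
definition Efun :: "real \<Rightarrow> nat \<Rightarrow> 'y \<Rightarrow> real" where
  "Efun q2 n = infc (chi q2 (ctr n) (rad n))"

definition tfun :: "('y \<Rightarrow> real) \<Rightarrow> real \<Rightarrow> real \<Rightarrow> real \<Rightarrow> nat \<Rightarrow> nat \<Rightarrow> 'y \<Rightarrow> real" where
  "tfun P q0 q1 q2 m n = (if nontriv P q0 q2 m n then (\<lambda>z. clamp (q1 - Dfun q2 m z)) else (\<lambda>z. 0))"
definition ufun :: "('y \<Rightarrow> real) \<Rightarrow> real \<Rightarrow> real \<Rightarrow> real \<Rightarrow> nat \<Rightarrow> nat \<Rightarrow> 'y \<Rightarrow> real" where
  "ufun P q0 q1 q2 m n = (if nontriv P q0 q2 m n then (\<lambda>z. clamp (q2 + Efun q2 n z)) else (\<lambda>z. 1))"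
definition basef :: "nat \<Rightarrow> nat \<Rightarrow> 'y \<Rightarrow> real" where
  "basef i j = (\<lambda>z. clamp (0 + infc (bump (cen i) (1 / (real j + 1))) z))"

definition good :: "('y \<Rightarrow> real) \<Rightarrow> bool" where
  "good P \<longleftrightarrow> (\<forall>z\<in>M. 0 \<le> P z \<and> P z \<le> 1) \<and> usc P \<and> olip P"

lemma good_const: "0 \<le> c \<Longrightarrow> c \<le> 1 \<Longrightarrow> good (\<lambda>z. c)"
  unfolding good_def using usc_const olip_const by simp

lemma chi_bd: "q \<ge> 0 \<Longrightarrow> w \<in> M \<Longrightarrow> -q \<le> chi q c r w \<and> chi q c r w \<le> q"
  using chi_range by simp

lemma good_tfun: assumes q2: "q2 \<ge> 0" shows "good (tfun P q0 q1 q2 m n)"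
proof (cases "nontriv P q0 q2 m n")
  case True
  have lsc: "lsc (Dfun q2 m)" unfolding Dfun_def
    by (rule supc_lsc[where lo="-q2" and hi=q2, OF chi_bd[OF q2] cont_chi[OF ctr_M]])
  have ol: "olip (Dfun q2 m)" unfolding Dfun_def
    by (rule supc_olip[where lo="-q2" and hi=q2, OF chi_bd[OF q2]])
  have e: "(\<lambda>z. clamp (q1 + (-1) * Dfun q2 m z)) = (\<lambda>z. clamp (q1 - Dfun q2 m z))" by simp
  have o2: "olip (\<lambda>z. clamp (q1 - Dfun q2 m z))" using olip_clamp[OF ol, of "-1" q1] unfolding e by simp
  have u2: "usc (\<lambda>z. clamp (q1 - Dfun q2 m z))" by (rule usc_clamp_minus[OF lsc])
  have t: "tfun P q0 q1 q2 m n = (\<lambda>z. clamp (q1 - Dfun q2 m z))" using True unfolding tfun_def by simp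
  show ?thesis unfolding t good_def using o2 u2 clamp_range by blast
next
  case False
  then show ?thesis unfolding tfun_def using good_const by simp
qed

lemma good_ufun: assumes q2: "q2 \<ge> 0" shows "good (ufun P q0 q1 q2 m n)"
proof (cases "nontriv P q0 q2 m n")
  case True
  have us: "usc (Efun q2 n)" unfolding Efun_def
    by (rule infc_usc[where lo="-q2" and hi=q2, OF chi_bd[OF q2] cont_chi[OF ctr_M]])
  have ol: "olip (Efun q2 n)" unfolding Efun_def
    by (rule infc_olip[where lo="-q2" and hi=q2, OF chi_bd[OF q2]])
  have o2: "olip (\<lambda>z. clamp (q2 + Efun q2 n z))" using olip_clamp[OF ol, of 1 q2] by simp
  have u2: "usc (\<lambda>z. clamp (q2 + Efun q2 n z))" by (rule usc_clamp_plus[OF us])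
  have t: "ufun P q0 q1 q2 m n = (\<lambda>z. clamp (q2 + Efun q2 n z))" using True unfolding ufun_def by simp
  show ?thesis unfolding t good_def using o2 u2 clamp_range by blast
next
  case False
  then show ?thesis unfolding ufun_def using good_const by simp
qed

lemma good_basef: "good (basef i j)"
proof -
  have us: "usc (infc (bump (cen i) (1 / (real j + 1))))"
    by (rule infc_usc[where lo=0 and hi=1, OF _ cont_bump[OF cenM]]) (simp add: bump_range)
  have ol: "olip (infc (bump (cen i) (1 / (real j + 1))))"
    by (rule infc_olip[where lo=0 and hi=1]) (simp add: bump_range)
  have o2: "olip (basef i j)" unfolding basef_def using olip_clamp[OF ol, of 1 0] by simp
  have u2: "usc (basef i j)" unfolding basef_def by (rule usc_clamp_plus[OF us])
  show ?thesis unfolding good_def using o2 u2 clamp_range unfolding basef_def by blast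
qed

lemma Dle: assumes nt: "nontriv P q0 q2 m n" and q2: "q2 > 0" and z: "z \<in> M"
  shows "Dfun q2 m z \<le> Efun q2 n z"
proof -
  let ?c = "chi q2 (ctr m) (rad m)" and ?c' = "chi q2 (ctr n) (rad n)"
  have bc: "\<And>w. w \<in> M \<Longrightarrow> -q2 \<le> ?c w \<and> ?c w \<le> q2" using chi_bd q2 by simp
  have bc': "\<And>w. w \<in> M \<Longrightarrow> -q2 \<le> ?c' w \<and> ?c' w \<le> q2" using chi_bd q2 by simp
  have pw: "Dfun q2 m w \<le> ?c' w" if w: "w \<in> M" for w
  proof (cases "\<rho> w (ctr n) < 2 * rad n")
    case True
    have "Dfun q2 m w \<le> -q2" unfolding Dfun_def
    proof (rule supc_le[where lo="-q2" and hi=q2, OF bc])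
      fix g assume g: "g \<in> carrier G"
      show "?c (a g w) - d g \<one> \<le> -q2"
      proof (cases "d g \<one> < 2 * q2")
        case True
        then have "\<rho> (a g w) (ctr m) \<le> rad m" using nt w g \<open>\<rho> w (ctr n) < 2 * rad n\<close>
          unfolding nontriv_def by blast
        then have "bump (ctr m) (rad m) (a g w) = 0" using bump_zero rad_pos by blast
        then show ?thesis unfolding chi_def using d_nonneg[of g \<one>] by simp
      next
        case False
        then show ?thesis using bc[OF a_M[OF g w]] by linarith
      qed
    qed
    then show ?thesis using bc'[OF w] by linarith
  next
    case False
    then have "bump (ctr n) (rad n) w = 1" using bump_one rad_pos by simp
    then have "?c' w = q2" unfolding chi_def by simp
    then show ?thesis using supc_upper[where lo="-q2" and hi=q2, OF bc w] unfolding Dfun_def by simp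
  qed
  show ?thesis unfolding Efun_def
  proof (rule infc_ge[where lo="-q2" and hi=q2, OF bc'])
    fix h assume h: "h \<in> carrier G"
    have "Dfun q2 m z \<le> Dfun q2 m (a h z) + d h \<one>"
      using olipD[OF supc_olip[where lo="-q2" and hi=q2, OF bc] z h] unfolding Dfun_def .
    also have "\<dots> \<le> ?c' (a h z) + d h \<one>" using pw[OF a_M[OF h z]] by simp
    finally show "Dfun q2 m z \<le> ?c' (a h z) + d h \<one>" .
  qed
qed

lemma cond1: assumes z: "z \<in> M" and e: "0 < e" "e < q2" "e < q1"
  shows "tfun P q0 q1 q2 m n z < q1 - e \<or> P z \<le> q0 + e"
proof (cases "nontriv P q0 q2 m n")
  case True
  show ?thesis
  proof (rule disjCI)
    assume "\<not> P z \<le> q0 + e"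
    then have Pz: "P z > q0 + e" by simp
    have "\<not> \<rho> z (ctr m) < 2 * rad m" using True z Pz e unfolding nontriv_def by force
    then have "bump (ctr m) (rad m) z = 1" using bump_one rad_pos by simp
    then have cz: "chi q2 (ctr m) (rad m) z = q2" unfolding chi_def by simp
    have "chi q2 (ctr m) (rad m) z \<le> Dfun q2 m z" unfolding Dfun_def
      by (rule supc_self[where lo="-q2" and hi=q2]) (use chi_bd e z in auto)
    then have "q1 - Dfun q2 m z < q1 - e" using cz e by simp
    then show "tfun P q0 q1 q2 m n z < q1 - e" using True e unfolding tfun_def
      by (simp add: clamp_less)
  qed
next
  case False
  then show ?thesis unfolding tfun_def using e by simp
qed

lemma cond2: assumes z: "z \<in> M" and e: "0 < e" "e < q2" "e < q1" "q2 + e < 1" "q1 - e < 1"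
  shows "ufun P q0 q1 q2 m n z \<ge> q2 + e \<or> tfun P q0 q1 q2 m n z \<ge> q1 - e"
proof (cases "nontriv P q0 q2 m n")
  case True
  show ?thesis
  proof (rule disjCI)
    assume "\<not> tfun P q0 q1 q2 m n z \<ge> q1 - e"
    then have "clamp (q1 - Dfun q2 m z) < q1 - e" using True unfolding tfun_def by simp
    then have "\<not> q1 - e \<le> q1 - Dfun q2 m z" using clamp_ge[of "q1 - e" "q1 - Dfun q2 m z"] e by linarith
    then have "Dfun q2 m z > e" by simp
    then have "Efun q2 n z > e" using Dle[OF True _ z] e by force
    then have "q2 + e \<le> q2 + Efun q2 n z" by simp
    then show "ufun P q0 q1 q2 m n z \<ge> q2 + e" using True e clamp_ge[of "q2 + e"] unfolding ufun_def
      by simp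
  qed
next
  case False
  then show ?thesis unfolding ufun_def using e by simp
qed


lemma small_nat: "(e::real) > 0 \<Longrightarrow> \<exists>j::nat. 1 / (real j + 1) < e"
proof -
  assume "e > 0"
  then obtain n :: nat where n: "n \<noteq> 0" "inverse (real n) < e" using real_arch_inverse by blast
  then have "real (n - 1) + 1 = real n" by (simp add: of_nat_diff)
  then have "1 / (real (n - 1) + 1) = inverse (real n)" by (simp add: inverse_eq_divide)
  then show ?thesis using n(2) by (intro exI[of _ "n - 1"]) simp
qed

lemma nbhd: assumes U: "openin TY U" and z0: "z0 \<in> U"
  shows "\<exists>\<theta>>0. \<exists>r0>0. \<forall>g\<in>carrier G. \<forall>w\<in>M. d \<one> g < \<theta> \<longrightarrow> \<rho> z0 w < r0 \<longrightarrow> a g w \<in> U"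
proof -
  let ?GT = "Metric_space.mtopology (carrier G) d"
  let ?S = "{x \<in> topspace (prod_topology ?GT TY). (\<lambda>(g, y). a g y) x \<in> U}"
  have S: "openin (prod_topology ?GT TY) ?S"
    by (rule openin_continuous_map_preimage[OF cont U])
  have z0M: "z0 \<in> M" using openin_subset[OF U] z0 topY by blast
  have "(\<one>, z0) \<in> ?S" using z0 z0M a_one[OF z0M] topY Metric_space.topspace_mtopology[OF dm] by simp
  from S[unfolded openin_prod_topology_alt, rule_format, OF this]
  obtain U1 V1 where U1: "openin ?GT U1" and V1: "openin TY V1" and in1: "\<one> \<in> U1" "z0 \<in> V1"
    and sub: "U1 \<times> V1 \<subseteq> ?S"
    by blast
  obtain \<theta> where th: "\<theta> > 0" "Metric_space.mball (carrier G) d \<one> \<theta> \<subseteq> U1"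
    using U1 in1 unfolding Metric_space.openin_mtopology[OF dm] by blast
  obtain r0 where r0: "r0 > 0" "Metric_space.mball M \<rho> z0 r0 \<subseteq> V1"
    using V1 in1 unfolding TYeq Metric_space.openin_mtopology[OF ym] by blast
  show ?thesis
  proof (rule exI[of _ \<theta>], intro conjI th(1), rule exI[of _ r0], intro conjI r0(1) ballI impI)
    fix g w assume g: "g \<in> carrier G" and w: "w \<in> M" and dg: "d \<one> g < \<theta>" and rw: "\<rho> z0 w < r0"
    have "g \<in> Metric_space.mball (carrier G) d \<one> \<theta>" using g dg one_c Metric_space.in_mball[OF dm] by simp
    then have "g \<in> U1" using th(2) by (rule subsetD[rotated])
    have "w \<in> Metric_space.mball M \<rho> z0 r0" using w rw z0M Metric_space.in_mball[OF ym] by simp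
    then have "w \<in> V1" using r0(2) by (rule subsetD[rotated])
    have "(g, w) \<in> ?S" using sub \<open>g \<in> U1\<close> \<open>w \<in> V1\<close> by blast
    then show "a g w \<in> U" by simp
  qed
qed

lemma cond3:
  assumes P: "usc P" and z0: "z0 \<in> M" and q0: "0 < q0" "q0 < 1" and Pz: "P z0 < of_rat q0"
  shows "\<exists>q1 q2 m n. 0 < q2 \<and> q2 < q1 \<and> q1 < q0 \<and>
     ufun P (of_rat q0) (of_rat q1) (of_rat q2) m n z0 < of_rat q2"
proof -
  let ?O = "{z \<in> M. P z < of_rat q0}"
  have O: "openin TY ?O" using P unfolding usc_def by blast
  obtain R where R: "R > 0" "Metric_space.mball M \<rho> z0 R \<subseteq> ?O"
    using O z0 Pz unfolding TYeq Metric_space.openin_mtopology[OF ym] by blast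
  obtain j where j: "1 / (real j + 1) < R / 3" using small_nat[of "R/3"] R by auto
  define r where "r = 1 / (real j + 1)"
  have r: "r > 0" "3 * r < R" using j unfolding r_def by auto
  obtain i where i: "\<rho> (cen i) z0 < r" using dense[OF z0 r(1)] by blast
  define m where "m = prod_encode (i, j)"
  have cm: "ctr m = cen i" and rm: "rad m = r" unfolding ctr_def rad_def m_def r_def by simp_all
  define c where "c = cen i"
  have cM: "c \<in> M" using cenM c_def by simp
  have part1: "\<forall>w\<in>M. \<rho> w (ctr m) < 2 * rad m \<longrightarrow> P w < of_rat q0"
  proof (intro ballI impI)
    fix w assume w: "w \<in> M" and lt: "\<rho> w (ctr m) < 2 * rad m"
    have "\<rho> z0 w \<le> \<rho> z0 c + \<rho> c w" using rho_tri[OF z0 cM w] .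
    also have "\<dots> < R" using i lt r rho_comm[of z0 c] rho_comm[of c w] unfolding cm rm c_def by linarith
    finally have "w \<in> Metric_space.mball M \<rho> z0 R" using z0 w Metric_space.in_mball[OF ym] by blast
    then show "P w < of_rat q0" using R(2) by blast
  qed
  have U: "openin TY (Metric_space.mball M \<rho> c r)" unfolding TYeq by (rule Metric_space.openin_mball[OF ym])
  have "z0 \<in> Metric_space.mball M \<rho> c r" using cM z0 i c_def Metric_space.in_mball[OF ym] by blast
  from nbhd[OF U this] obtain \<theta> r0 where th: "\<theta> > 0" "r0 > 0"
    and nb: "\<forall>g\<in>carrier G. \<forall>w\<in>M. d \<one> g < \<theta> \<longrightarrow> \<rho> z0 w < r0 \<longrightarrow> a g w \<in> Metric_space.mball M \<rho> c r"
    by blast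
  obtain N where N: "1 / (real N + 1) < min (\<theta> / 2) (1 / 2)" using small_nat[of "min (\<theta> / 2) (1 / 2)"] th by auto
  define q2 where "q2 = q0 / (of_nat N + 1)"
  define q1 where "q1 = (q0 + q2) / 2"
  have rq2: "of_rat q2 = of_rat q0 / (real N + 1)" unfolding q2_def by (simp add: of_rat_divide of_rat_add)
  have q2pos: "0 < q2" unfolding q2_def using q0 by simp
  have "q0 / (of_nat N + 1) < q0"
    using q0 N by (simp add: divide_less_eq field_simps)
  then have q2lt: "q2 < q0" unfolding q2_def .
  have q2q1: "q2 < q1" "q1 < q0" unfolding q1_def using q2lt by simp_all
  have "of_rat q0 / (real N + 1) \<le> 1 / (real N + 1)"
    using q0 by (simp add: divide_right_mono of_rat_less_eq[of q0 1, simplified] less_imp_le)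
  then have th2: "2 * of_rat q2 < \<theta>" using N rq2 by simp
  obtain j' where j': "1 / (real j' + 1) < r0 / 3" using small_nat[of "r0/3"] th by auto
  define r' where "r' = 1 / (real j' + 1)"
  have r': "r' > 0" "3 * r' < r0" using j' unfolding r'_def by auto
  obtain i' where i': "\<rho> (cen i') z0 < r'" using dense[OF z0 r'(1)] by blast
  define n where "n = prod_encode (i', j')"
  have cn: "ctr n = cen i'" and rn: "rad n = r'" unfolding ctr_def rad_def n_def r'_def by simp_all
  have c'M: "cen i' \<in> M" using cenM by simp
  have part2: "\<forall>w\<in>M. \<rho> w (ctr n) < 2 * rad n \<longrightarrow>
           (\<forall>g\<in>carrier G. d g \<one> < 2 * of_rat q2 \<longrightarrow> \<rho> (a g w) (ctr m) \<le> rad m)"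
  proof (intro ballI impI)
    fix w g assume w: "w \<in> M" and lt: "\<rho> w (ctr n) < 2 * rad n" and g: "g \<in> carrier G"
      and dg: "d g \<one> < 2 * of_rat q2"
    have "\<rho> z0 w \<le> \<rho> z0 (cen i') + \<rho> (cen i') w" using rho_tri[OF z0 c'M w] .
    also have "\<dots> < r0" using i' lt r' rho_comm[of z0 "cen i'"] rho_comm[of "cen i'" w] unfolding cn rn by linarith
    finally have "\<rho> z0 w < r0" .
    moreover have "d \<one> g < \<theta>" using dg th2 d_comm[of \<one> g] by linarith
    ultimately have "a g w \<in> Metric_space.mball M \<rho> c r" using nb g w by blast
    then have "\<rho> c (a g w) < r" using Metric_space.in_mball[OF ym] by blast
    then show "\<rho> (a g w) (ctr m) \<le> rad m" using rho_comm[of c] unfolding cm rm c_def by simp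
  qed
  have nt: "nontriv P (of_rat q0) (of_rat q2) m n" unfolding nontriv_def using part1 part2 by blast
  have q2r: "(0::real) < of_rat q2" using q2pos by simp
  have "Efun (of_rat q2) n z0 \<le> chi (of_rat q2) (ctr n) (rad n) z0" unfolding Efun_def
    by (rule infc_self[where lo="- of_rat q2" and hi="of_rat q2", OF chi_bd z0]) (use q2r in simp)
  moreover have "bump (ctr n) (rad n) z0 = 0"
    using bump_zero[OF r'(1)] i' rho_comm[of z0 "cen i'"] unfolding cn rn by simp
  ultimately have "Efun (of_rat q2) n z0 \<le> - of_rat q2" unfolding chi_def by simp
  then have "of_rat q2 + Efun (of_rat q2) n z0 < of_rat q2" using q2r by linarith
  then have "ufun P (of_rat q0) (of_rat q1) (of_rat q2) m n z0 < of_rat q2"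
    using nt q2r unfolding ufun_def by (simp add: clamp_less)
  then show ?thesis using q2pos q2q1 by blast
qed

lemma base_open: assumes U: "openin TY U" and y: "y \<in> U"
  shows "\<exists>i j q. (0::rat) < q \<and> basef i j y < of_rat q \<and> {z \<in> M. basef i j z < of_rat q} \<subseteq> U"
proof -
  have yM: "y \<in> M" using openin_subset[OF U] y topY by blast
  from nbhd[OF U y] obtain \<theta> r0 where th: "\<theta> > 0" "r0 > 0"
    and nb: "\<forall>g\<in>carrier G. \<forall>w\<in>M. d \<one> g < \<theta> \<longrightarrow> \<rho> y w < r0 \<longrightarrow> a g w \<in> U"
    by blast
  obtain j where j: "1 / (real j + 1) < r0 / 3" using small_nat[of "r0/3"] th by auto
  define r where "r = 1 / (real j + 1)"
  have r: "r > 0" "3 * r < r0" using j unfolding r_def by auto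
  obtain i where i: "\<rho> (cen i) y < r" using dense[OF yM r(1)] by blast
  have cM: "cen i \<in> M" using cenM by simp
  obtain N where N: "1 / (real N + 1) < min \<theta> 1" using small_nat[of "min \<theta> 1"] th by auto
  define q :: rat where "q = 1 / (of_nat N + 1)"
  have rq: "of_rat q = 1 / (real N + 1)" unfolding q_def by (simp add: of_rat_divide of_rat_add)
  have qpos: "0 < q" unfolding q_def by simp
  have bf: "basef i j = (\<lambda>z. clamp (infc (bump (cen i) r) z))" unfolding basef_def r_def by simp
  have bb: "\<And>w. w \<in> M \<Longrightarrow> 0 \<le> bump (cen i) r w \<and> bump (cen i) r w \<le> 1" using bump_range by simp
  have "infc (bump (cen i) r) y \<le> bump (cen i) r y" by (rule infc_self[OF bb yM])
  also have "\<dots> = 0" using bump_zero[OF r(1)] i rho_comm[of y "cen i"] by simp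
  finally have "infc (bump (cen i) r) y < 1 / (real N + 1)"
    by (smt (verit) divide_pos_pos of_nat_less_0_iff)
  then have "basef i j y < of_rat q" unfolding bf using rq by (simp add: clamp_less)
  moreover have "{z \<in> M. basef i j z < of_rat q} \<subseteq> U"
  proof
    fix z assume "z \<in> {z \<in> M. basef i j z < of_rat q}"
    then have z: "z \<in> M" and lt: "clamp (infc (bump (cen i) r) z) < of_rat q" unfolding bf by auto
    have q1: "of_rat q \<le> (1::real)" using rq by simp
    have "infc (bump (cen i) r) z < of_rat q" using lt q1 by (simp add: clamp_less)
    then obtain h where h: "h \<in> carrier G" and hl: "bump (cen i) r (a h z) + d h \<one> < of_rat q"
      using infc_less[where f="bump (cen i) r" and lo=0, OF _ z] bump_range by blast
    have "bump (cen i) r (a h z) < 1" using hl q1 d_nonneg[of h \<one>] by linarith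
    then have rw: "\<rho> (a h z) (cen i) < 2 * r" using bump_lt1[OF r(1)] by blast
    have dh: "d h \<one> < \<theta>" using hl bump_range[of "cen i" r "a h z"] rq N by simp
    have wM: "a h z \<in> M" using a_M[OF h z] .
    have "\<rho> y (a h z) \<le> \<rho> y (cen i) + \<rho> (cen i) (a h z)" using rho_tri[OF yM cM wM] .
    also have "\<dots> < r0" using i rw r rho_comm[of y "cen i"] rho_comm[of "cen i" "a h z"] by linarith
    finally have "\<rho> y (a h z) < r0" .
    moreover have "d \<one> (inv h) < \<theta>" using d_inv1[OF h] dh d_comm[of \<one> "inv h"] by simp
    ultimately have "a (inv h) (a h z) \<in> U" using nb inv_c[OF h] wM by blast
    then show "z \<in> U" using a_inv_cancel[OF z h] by simp
  qed
  ultimately show ?thesis using qpos by blast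
qed


fun psi :: "rat list \<Rightarrow> 'y \<Rightarrow> real" where
  "psi (nn # mm # b # q2 # q1 # q0 # rs) =
     (if in01 q0 \<and> in01 q1 \<and> in01 q2 \<and> mm \<in> \<nat> \<and> nn \<in> \<nat> \<and> (b = 0 \<or> b = 1) then
        (if b = 0 then tfun (psi rs) (of_rat q0) (of_rat q1) (of_rat q2) (nat \<lfloor>mm\<rfloor>) (nat \<lfloor>nn\<rfloor>)
         else ufun (psi rs) (of_rat q0) (of_rat q1) (of_rat q2) (nat \<lfloor>mm\<rfloor>) (nat \<lfloor>nn\<rfloor>))
      else (\<lambda>z. 0))"
| "psi [jj, ii] = (if ii \<in> \<nat> \<and> jj \<in> \<nat> then basef (nat \<lfloor>ii\<rfloor>) (nat \<lfloor>jj\<rfloor>) else (\<lambda>z. 0))"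
| "psi _ = (\<lambda>z. 0)"

lemma good_psi: "good (psi l)"
proof (induction l rule: psi.induct)
  case (1 nn mm b q2 q1 q0 rs)
  have g0: "good (\<lambda>z. 0)" by (rule good_const) simp_all
  show ?case
  proof (cases "in01 q0 \<and> in01 q1 \<and> in01 q2 \<and> mm \<in> \<nat> \<and> nn \<in> \<nat> \<and> (b = 0 \<or> b = 1)")
    case True
    then have "(0::real) \<le> of_rat q2" unfolding in01_def by simp
    then show ?thesis using True good_tfun good_ufun by simp
  next
    case False
    have "psi (nn # mm # b # q2 # q1 # q0 # rs) = (\<lambda>z. 0)"
      by (simp only: psi.simps(1) if_not_P[OF False])
    then show ?thesis using g0 by simp
  qed
next
  case (2 jj ii)
  show ?case using good_basef good_const[of 0] by simp
qed (simp_all add: good_const)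

definition Phi :: "rat list \<Rightarrow> 'y \<Rightarrow> real" where "Phi s = psi (rev s)"

lemma good_Phi: "good (Phi s)" unfolding Phi_def by (rule good_psi)

lemma Phi_t: "in01 q0 \<Longrightarrow> in01 q1 \<Longrightarrow> in01 q2 \<Longrightarrow>
  Phi (s @ [q0, q1, q2, 0, of_nat m, of_nat n]) = tfun (Phi s) (of_rat q0) (of_rat q1) (of_rat q2) m n"
  unfolding Phi_def by simp

lemma Phi_u: "in01 q0 \<Longrightarrow> in01 q1 \<Longrightarrow> in01 q2 \<Longrightarrow>
  Phi (s @ [q0, q1, q2, 1, of_nat m, of_nat n]) = ufun (Phi s) (of_rat q0) (of_rat q1) (of_rat q2) m n"
  unfolding Phi_def by simp

lemma Phi_base: "Phi [of_nat i, of_nat j] = basef i j"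
  unfolding Phi_def by simp

definition pi :: "'y \<Rightarrow> rat list \<Rightarrow> 'g \<Rightarrow> real" where
  "pi y = (\<lambda>s. \<lambda>g\<in>carrier G. Phi s (a g y))"

lemma pi_app: "g \<in> carrier G \<Longrightarrow> pi y s g = Phi s (a g y)" unfolding pi_def by simp

lemma olip_lip: assumes P: "olip P" and y: "y \<in> M" and g: "g \<in> carrier G" and h: "h \<in> carrier G"
  shows "\<bar>P (a g y) - P (a h y)\<bar> \<le> d g h"
proof -
  have k: "g \<otimes> inv h \<in> carrier G" using g h by simp
  have "a (g \<otimes> inv h) (a h y) = a (g \<otimes> inv h \<otimes> h) y" using a_comp[OF y k h] by simp
  also have "g \<otimes> inv h \<otimes> h = g" using g h by (simp add: m_assoc)
  finally have e: "a (g \<otimes> inv h) (a h y) = a g y" .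
  have "\<bar>P (a (g \<otimes> inv h) (a h y)) - P (a h y)\<bar> \<le> d (g \<otimes> inv h) \<one>"
    using P a_M[OF h y] k unfolding olip_def by blast
  then show ?thesis using e d_inv[OF g h] by simp
qed

lemma pi_X: assumes G0: "G0 \<subseteq> carrier G" and y: "y \<in> M" shows "pi y \<in> Xset G d G0"
  unfolding Xset_def
proof (intro CollectI conjI allI ballI impI)
  fix s
  have gd: "good (Phi s)" by (rule good_Phi)
  show "pi y s \<in> Lip_fun G d" unfolding Lip_fun_def
  proof (intro CollectI conjI ballI)
    show "pi y s \<in> extensional (carrier G)" unfolding pi_def by simp
  next
    fix x assume x: "x \<in> carrier G"
    show "0 \<le> pi y s x" "pi y s x \<le> 1" using gd a_M[OF x y] unfolding pi_app[OF x] good_def by auto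
  next
    fix x z assume x: "x \<in> carrier G" and z: "z \<in> carrier G"
    show "\<bar>pi y s x - pi y s z\<bar> \<le> d x z" unfolding pi_app[OF x] pi_app[OF z]
      using olip_lip[OF _ y x z] gd unfolding good_def by blast
  qed
next
  fix s g0 m n q0 q1 q2 \<epsilon>
  assume g0: "g0 \<in> G0"
    and q: "in01 q0 \<and> in01 q1 \<and> in01 q2 \<and> in01 \<epsilon> \<and> in01 (q0 - \<epsilon>) \<and> in01 (q0 + \<epsilon>) \<and>
            in01 (q1 - \<epsilon>) \<and> in01 (q1 + \<epsilon>) \<and> in01 (q2 - \<epsilon>) \<and> in01 (q2 + \<epsilon>)"
  have g0c: "g0 \<in> carrier G" using g0 G0 by blast
  have z: "a g0 y \<in> M" using a_M[OF g0c y] .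
  have rr: "\<And>x y. (x::rat) < y \<Longrightarrow> (of_rat x::real) < of_rat y" by (simp add: of_rat_less)
  have e: "(0::real) < of_rat \<epsilon>" "of_rat \<epsilon> < (of_rat q2::real)" "of_rat \<epsilon> < (of_rat q1::real)"
    "of_rat q2 + of_rat \<epsilon> < (1::real)" "of_rat q1 - of_rat \<epsilon> < (1::real)"
    using rr[of 0 \<epsilon>] rr[of \<epsilon> q2] rr[of \<epsilon> q1] rr[of "q2 + \<epsilon>" 1] rr[of "q1 - \<epsilon>" 1] q
    unfolding in01_def by (simp_all add: of_rat_add of_rat_diff)
  have c1: "tfun (Phi s) (of_rat q0) (of_rat q1) (of_rat q2) m n (a g0 y) < of_rat q1 - of_rat \<epsilon>
      \<or> Phi s (a g0 y) \<le> of_rat q0 + of_rat \<epsilon>"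
    by (rule cond1[OF z e(1-3)])
  show "pi y (s @ [q0, q1, q2, 0, of_nat m, of_nat n]) g0 < of_rat (q1 - \<epsilon>) \<or> pi y s g0 \<le> of_rat (q0 + \<epsilon>)"
    unfolding pi_app[OF g0c] using c1 Phi_t q by (simp add: of_rat_add of_rat_diff)
  have c2: "ufun (Phi s) (of_rat q0) (of_rat q1) (of_rat q2) m n (a g0 y) \<ge> of_rat q2 + of_rat \<epsilon>
      \<or> tfun (Phi s) (of_rat q0) (of_rat q1) (of_rat q2) m n (a g0 y) \<ge> of_rat q1 - of_rat \<epsilon>"
    by (rule cond2[OF z e])
  show "of_rat (q2 + \<epsilon>) \<le> pi y (s @ [q0, q1, q2, 1, of_nat m, of_nat n]) g0 \<or>
        of_rat (q1 - \<epsilon>) \<le> pi y (s @ [q0, q1, q2, 0, of_nat m, of_nat n]) g0"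
    unfolding pi_app[OF g0c] using c2 Phi_t Phi_u q by (simp add: of_rat_add of_rat_diff)
next
  fix s g0 q0 \<epsilon>
  assume g0: "g0 \<in> G0" and q: "in01 q0 \<and> in01 \<epsilon>" and lt: "pi y s g0 < of_rat q0"
  have g0c: "g0 \<in> carrier G" using g0 G0 by blast
  have z: "a g0 y \<in> M" using a_M[OF g0c y] .
  have us: "usc (Phi s)" using good_Phi unfolding good_def by blast
  have "Phi s (a g0 y) < of_rat q0" using lt unfolding pi_app[OF g0c] .
  from cond3[OF us z _ _ this] q obtain q1 q2 m n where
    qq: "0 < q2" "q2 < q1" "q1 < q0" and u: "ufun (Phi s) (of_rat q0) (of_rat q1) (of_rat q2) m n (a g0 y) < of_rat q2"
    unfolding in01_def by blast
  have i01: "in01 q0" "in01 q1" "in01 q2" using qq q unfolding in01_def by auto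
  have "pi y (s @ [q0, q1, q2, 1, of_nat m, of_nat n]) g0 < of_rat q2"
    unfolding pi_app[OF g0c] Phi_u[OF i01] using u .
  moreover have "d g0 g0 < of_rat \<epsilon>" using d_self[OF g0c] q unfolding in01_def by simp
  ultimately show "\<exists>q1 q2. \<exists>g1\<in>G0. \<exists>m n. 0 < q2 \<and> q2 < q1 \<and> q1 < q0 \<and> q0 < 1 \<and> d g0 g1 < of_rat \<epsilon> \<and>
              pi y (s @ [q0, q1, q2, 1, of_nat m, of_nat n]) g1 < of_rat q2"
    using qq q g0 unfolding in01_def by blast
qed


lemma main:
  assumes G0: "G0 \<subseteq> carrier G" "\<one> \<in> G0"
  shows "\<exists>\<pi>. continuous_map TY (Xtop G d G0) \<pi>
           \<and> inj_on \<pi> (topspace TY)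
           \<and> (\<forall>g\<in>carrier G. \<forall>y\<in>topspace TY. \<pi> (a g y) = actX G g (\<pi> y))
           \<and> (\<forall>U. openin TY U \<longrightarrow>
                 (\<exists>V. openin (Xtop G d G0) V \<and> U = {y \<in> topspace TY. \<pi> y \<in> V}))"
proof -
  define S where "S = {{F \<in> Xset G d G0. F s g0 < of_rat q0} | s g0 q0. g0 \<in> G0}"
  have Xt: "Xtop G d G0 = topology_generated_by S" unfolding Xtop_def S_def by simp
  have US: "\<Union>S = Xset G d G0"
  proof
    show "\<Union>S \<subseteq> Xset G d G0" unfolding S_def by blast
  next
    show "Xset G d G0 \<subseteq> \<Union>S"
    proof
      fix F assume F: "F \<in> Xset G d G0"
      have "\<forall>s. F s \<in> Lip_fun G d" using F unfolding Xset_def mem_Collect_eq by (rule conjunct1)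
      then have "F [] \<in> Lip_fun G d" by (rule spec)
      then have "F [] \<one> \<le> 1" using one_c unfolding Lip_fun_def by blast
      then have "F \<in> {F \<in> Xset G d G0. F [] \<one> < of_rat 2}" using F by simp
      moreover have "{F \<in> Xset G d G0. F [] \<one> < of_rat 2} \<in> S" unfolding S_def using G0 by blast
      ultimately show "F \<in> \<Union>S" by blast
    qed
  qed
  have piX: "\<And>y. y \<in> M \<Longrightarrow> pi y \<in> Xset G d G0" using pi_X[OF G0(1)] by blast
  have cont_pi: "continuous_map TY (Xtop G d G0) pi"
    unfolding Xt
  proof (rule continuous_on_generated_topo)
    fix U assume "U \<in> S"
    then obtain s g0 q0 where g0: "g0 \<in> G0" and U: "U = {F \<in> Xset G d G0. F s g0 < of_rat q0}"
      unfolding S_def by blast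
    have g0c: "g0 \<in> carrier G" using g0 G0 by blast
    have O: "openin TY {z \<in> M. Phi s z < of_rat q0}" using good_Phi unfolding good_def usc_def by blast
    have "openin TY {y \<in> topspace TY. a g0 y \<in> {z \<in> M. Phi s z < of_rat q0}}"
      by (rule openin_continuous_map_preimage[OF cont_a[OF g0c] O])
    moreover have "{y \<in> topspace TY. a g0 y \<in> {z \<in> M. Phi s z < of_rat q0}} = pi -` U \<inter> topspace TY"
      unfolding U topY using piX a_M[OF g0c] pi_app[OF g0c] by auto
    ultimately show "openin TY (pi -` U \<inter> topspace TY)" by simp
  next
    show "pi ` topspace TY \<subseteq> \<Union>S" unfolding US topY using piX by blast
  qed
  have equiv: "\<forall>g\<in>carrier G. \<forall>y\<in>topspace TY. pi (a g y) = actX G g (pi y)"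
  proof (intro ballI)
    fix g y assume g: "g \<in> carrier G" and y: "y \<in> topspace TY"
    have yM: "y \<in> M" using y topY by simp
    show "pi (a g y) = actX G g (pi y)" unfolding actX_def
    proof (rule ext)
      fix s
      show "pi (a g y) s = (\<lambda>g0\<in>carrier G. pi y s (g0 \<otimes> g))" unfolding pi_def
        by (rule restrict_ext) (simp add: g a_comp[OF yM])
    qed
  qed
  have opn: "\<forall>U. openin TY U \<longrightarrow> (\<exists>V. openin (Xtop G d G0) V \<and> U = {y \<in> topspace TY. pi y \<in> V})"
  proof (intro allI impI)
    fix U assume U: "openin TY U"
    define V where "V = \<Union>{B \<in> S. {y \<in> M. pi y \<in> B} \<subseteq> U}"
    have "openin (Xtop G d G0) V" unfolding V_def Xt
      by (rule openin_Union) (auto intro: topology_generated_by_Basis)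
    moreover have "U = {y \<in> topspace TY. pi y \<in> V}"
    proof
      show "U \<subseteq> {y \<in> topspace TY. pi y \<in> V}"
      proof
        fix y assume y: "y \<in> U"
        have yM: "y \<in> M" using openin_subset[OF U] y topY by blast
        from base_open[OF U y] obtain i j q where q: "basef i j y < of_rat q"
          and sub: "{z \<in> M. basef i j z < of_rat q} \<subseteq> U" by blast
        define B where "B = {F \<in> Xset G d G0. F [of_nat i, of_nat j] \<one> < of_rat q}"
        have BS: "B \<in> S" unfolding B_def S_def using G0 by blast
        have pre: "{y \<in> M. pi y \<in> B} \<subseteq> U"
        proof
          fix x assume "x \<in> {y \<in> M. pi y \<in> B}"
          then have x: "x \<in> M" and lt: "pi x [of_nat i, of_nat j] \<one> < of_rat q" unfolding B_def by auto
          have "basef i j x < of_rat q" using lt unfolding pi_app[OF one_c] Phi_base a_one[OF x] .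
          then show "x \<in> U" using sub x by blast
        qed
        have "pi y [of_nat i, of_nat j] \<one> < of_rat q" unfolding pi_app[OF one_c] Phi_base a_one[OF yM]
          by (rule q)
        then have "pi y \<in> B" unfolding B_def by (intro CollectI conjI piX[OF yM])
        then show "y \<in> {y \<in> topspace TY. pi y \<in> V}" using BS pre yM topY unfolding V_def by blast
      qed
    next
      show "{y \<in> topspace TY. pi y \<in> V} \<subseteq> U" unfolding V_def topY by blast
    qed
    ultimately show "\<exists>V. openin (Xtop G d G0) V \<and> U = {y \<in> topspace TY. pi y \<in> V}" by blast
  qed
  have inj: "inj_on pi (topspace TY)"
  proof (rule inj_onI)
    fix x y assume x: "x \<in> topspace TY" and y: "y \<in> topspace TY" and e: "pi x = pi y"
    show "x = y"
    proof (rule ccontr)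
      assume ne: "x \<noteq> y"
      have xM: "x \<in> M" and yM: "y \<in> M" using x y topY by auto
      let ?U = "Metric_space.mball M \<rho> x (\<rho> x y)"
      have U: "openin TY ?U" unfolding TYeq by (rule Metric_space.openin_mball[OF ym])
      have "0 < \<rho> x y" using Metric_space.mdist_pos_less[OF ym ne xM yM] .
      then have xU: "x \<in> ?U" using xM Metric_space.in_mball[OF ym] Metric_space.mdist_zero[OF ym xM] by simp
      have yU: "y \<notin> ?U" using Metric_space.in_mball[OF ym] by simp
      from opn U obtain V where V: "?U = {y \<in> topspace TY. pi y \<in> V}" by blast
      have "x \<in> {y \<in> topspace TY. pi y \<in> V}" using xU V by simp
      then have "pi y \<in> V" using e by simp
      then have "y \<in> {y \<in> topspace TY. pi y \<in> V}" using y by simp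
      then have "y \<in> ?U" using V by simp
      then show False using yU by simp
    qed
  qed
  show ?thesis using cont_pi inj equiv opn by blast
qed

end

theorem lemma2p13:
  fixes G :: "('g, 'b) monoid_scheme" (structure)
    and d :: "'g \<Rightarrow> 'g \<Rightarrow> real"
    and G0 :: "'g set"
    and TY :: "'y topology"
    and a :: "'g \<Rightarrow> 'y \<Rightarrow> 'y"
  assumes "group G"
    and "Metric_space (carrier G) d"
    and "\<forall>x\<in>carrier G. \<forall>y\<in>carrier G. \<forall>h\<in>carrier G. d (x \<otimes> h) (y \<otimes> h) = d x y"
    and "\<forall>x\<in>carrier G. \<forall>y\<in>carrier G. d x y \<le> 1"
    and "Polish_space (Metric_space.mtopology (carrier G) d)"
    and "continuous_map (prod_topology (Metric_space.mtopology (carrier G) d)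
                                      (Metric_space.mtopology (carrier G) d))
                        (Metric_space.mtopology (carrier G) d) (\<lambda>(x, y). x \<otimes> y)"
    and "continuous_map (Metric_space.mtopology (carrier G) d)
                        (Metric_space.mtopology (carrier G) d) (\<lambda>x. inv x)"
    and "subgroup G0 G"
    and "countable G0"
    and "(Metric_space.mtopology (carrier G) d) closure_of G0 = carrier G"
    and "Polish_space TY"
    and "group_action G (topspace TY) a"
    and "continuous_map (prod_topology (Metric_space.mtopology (carrier G) d) TY) TY
                        (\<lambda>(g, y). a g y)"
  shows "\<exists>\<pi>. continuous_map TY (Xtop G d G0) \<pi>
           \<and> inj_on \<pi> (topspace TY)
           \<and> (\<forall>g\<in>carrier G. \<forall>y\<in>topspace TY. \<pi> (a g y) = actX G g (\<pi> y))
           \<and> (\<forall>U. openin TY U \<longrightarrow>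
                 (\<exists>V. openin (Xtop G d G0) V \<and> U = {y \<in> topspace TY. \<pi> y \<in> V}))"
proof -
  note A = assms
  show ?thesis
  proof (cases "topspace TY = {}")
    case True
    have "continuous_map TY (Xtop G d G0) (\<lambda>y. undefined)"
      unfolding continuous_map_def True by simp
    moreover have "\<forall>U. openin TY U \<longrightarrow>
                 (\<exists>V. openin (Xtop G d G0) V \<and> U = {y \<in> topspace TY. (\<lambda>y. undefined) y \<in> V})"
    proof (intro allI impI)
      fix U assume "openin TY U"
      then have "U = {}" using openin_subset True by blast
      then show "\<exists>V. openin (Xtop G d G0) V \<and> U = {y \<in> topspace TY. (\<lambda>y. undefined) y \<in> V}"
        using True by (intro exI[of _ "{}"]) simp
    qed
    ultimately show ?thesis using True by (intro exI[of _ "\<lambda>y. undefined"]) simp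
  next
    case False
    have "metrizable_space TY"
      using A(11) unfolding Polish_space_def by (simp add: completely_metrizable_imp_metrizable_space)
    then obtain M \<rho> where ym: "Metric_space M \<rho>" and TYeq: "TY = Metric_space.mtopology M \<rho>"
      unfolding metrizable_space_def by blast
    have topY: "topspace TY = M" using TYeq Metric_space.topspace_mtopology[OF ym] by simp
    obtain C where C: "countable C" "C \<subseteq> topspace TY" "TY closure_of C = topspace TY"
      using A(11) unfolding Polish_space_def separable_space_def by blast
    have Cne: "C \<noteq> {}"
    proof
      assume "C = {}"
      then have "topspace TY = {}" using C(3) by simp
      then show False using False by blast
    qed
    define cen where "cen = from_nat_into C"
    have cenM: "\<And>i. cen i \<in> M" unfolding cen_def using from_nat_into[OF Cne] C(2) topY by blast
    have dense: "\<And>z e. z \<in> M \<Longrightarrow> e > 0 \<Longrightarrow> \<exists>i. \<rho> (cen i) z < e"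
    proof -
      fix z e assume z: "z \<in> M" and e: "(e::real) > 0"
      have "z \<in> TY closure_of C" using C(3) z topY by simp
      moreover have "openin TY (Metric_space.mball M \<rho> z e)" unfolding TYeq
        by (rule Metric_space.openin_mball[OF ym])
      moreover have "z \<in> Metric_space.mball M \<rho> z e"
        using z e Metric_space.in_mball[OF ym] Metric_space.mdist_zero[OF ym z] by simp
      ultimately obtain c where c: "c \<in> C" "c \<in> Metric_space.mball M \<rho> z e"
        unfolding in_closure_of by blast
      obtain i where "from_nat_into C i = c" using from_nat_into_surj[OF C(1) c(1)] by blast
      have "\<rho> z c < e" using c(2) Metric_space.in_mball[OF ym] by blast
      then have "\<rho> (cen i) z < e" using \<open>from_nat_into C i = c\<close> Metric_space.commute[OF ym, of z c]
        unfolding cen_def by simp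
      then show "\<exists>i. \<rho> (cen i) z < e" by blast
    qed
    have act: "group_action G M a" using A(12) topY by simp
    interpret E: emb G d TY a M \<rho> cen
      by (intro emb.intro emb_axioms.intro A(1) A(2) A(3) act A(13) ym TYeq cenM dense)
    have G0: "G0 \<subseteq> carrier G" "\<one> \<in> G0"
      by (rule subgroup.subset[OF A(8)], rule subgroup.one_closed[OF A(8)])
    show ?thesis by (rule E.main[OF G0])
  qed
qed

end
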